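(* Let $G$ be a directed acyclic graph, let $s,t\in V(G)$, and let $k=\operatorname{fes}(G)$. Then the number of distinct directed $s$-$t$ paths in $G$ is at most $2^k$.
   Context: $\operatorname{fes}(G)$ denotes the minimum size of a feedback edge set of the underlying undirected graph of $G$, i.e., the minimum number of edges whose removal makes the underlying undirected graph acyclic (a forest). *)

theory Defs
  imports Main
begin

definition is_dag :: "'a set \<Rightarrow> ('a \<times> 'a) set \<Rightarrow> bool" where
  "is_dag V E \<longleftrightarrow> finite V \<and> E \<subseteq> V \<times> V \<and> acyclic E"

definition uadj :: "('a \<times> 'a) set \<Rightarrow> 'a \<Rightarrow> 'a \<Rightarrow> bool" where
  "uadj E u v \<longleftrightarrow> (u, v) \<in> E \<or> (v, u) \<in> E"

definition ucycle :: "('a \<times> 'a) set \<Rightarrow> 'a list \<Rightarrow> bool" where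
  "ucycle E c \<longleftrightarrow> length c \<ge> 3 \<and> distinct c \<and>
     (\<forall>i < length c. uadj E (c ! i) (c ! ((i + 1) mod length c)))"

definition uforest :: "('a \<times> 'a) set \<Rightarrow> bool" where
  "uforest E \<longleftrightarrow> (\<nexists>c. ucycle E c)"

definition fes :: "('a \<times> 'a) set \<Rightarrow> nat" where
  "fes E = Min (card ` {F. F \<subseteq> E \<and> uforest (E - F)})"

definition dpath :: "('a \<times> 'a) set \<Rightarrow> 'a \<Rightarrow> 'a \<Rightarrow> 'a list \<Rightarrow> bool" where
  "dpath E s t p \<longleftrightarrow> p \<noteq> [] \<and> hd p = s \<and> last p = t \<and> distinct p \<and>
     (\<forall>i. i + 1 < length p \<longrightarrow> (p ! i, p ! (i + 1)) \<in> E)"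

end

theory Submission
  imports Defs
begin

definition edg :: "'a list \<Rightarrow> ('a \<times> 'a) set" where
  "edg p = set (zip p (tl p))"

lemma edg_Cons2[simp]: "edg (x # y # r) = insert (x, y) (edg (y # r))"
  by (simp add: edg_def)

lemma edg_Nil[simp]: "edg [] = {}"
  by (simp add: edg_def)

lemma edg_single[simp]: "edg [x] = {}"
  by (simp add: edg_def)

lemma edg_first:
  assumes "distinct (x # y # r)" "(x, z) \<in> edg (x # y # r)"
  shows "z = y"
  using assms by (auto simp: edg_def dest: set_zip_leftD)

lemma edg_fst: "(x, y) \<in> edg p \<Longrightarrow> x \<in> set p"
  by (auto simp: edg_def dest: set_zip_leftD)

lemma edg_append_sub: "edg xs \<subseteq> edg (xs @ ys)"
proof (induction xs rule: induct_list012)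
  case (3 x y zs) then show ?case by auto
qed (auto simp: edg_def)

lemma edg_prefix: "edg xs \<subseteq> edg (xs @ ys)"
  by (rule edg_append_sub)

lemma succ_edg:
  assumes "\<And>x y. (x, y) \<in> edg p \<Longrightarrow> P x y"
  shows "successively P p"
  using assms
proof (induction p rule: induct_list012)
  case (3 x y zs) then show ?case by auto
qed auto

lemma reach_Cons:
  assumes "successively (\<lambda>x y. (x, y) \<in> E) (x # zs)" "y \<in> set zs"
  shows "(x, y) \<in> E\<^sup>+"
  using assms
proof (induction zs arbitrary: x)
  case Nil then show ?case by simp
next
  case (Cons z zs)
  then have xz: "(x, z) \<in> E" and s: "successively (\<lambda>x y. (x, y) \<in> E) (z # zs)" by auto
  show ?case
  proof (cases "y = z")
    case True then show ?thesis using xz by auto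
  next
    case False
    then have "y \<in> set zs" using Cons.prems by auto
    then have "(z, y) \<in> E\<^sup>+" using Cons.IH s by blast
    then show ?thesis using xz by (meson trancl_into_trancl2)
  qed
qed

lemma reach_app:
  assumes "successively (\<lambda>x y. (x, y) \<in> E) (xs @ ys)" "x \<in> set xs" "y \<in> set ys"
  shows "(x, y) \<in> E\<^sup>+"
proof -
  obtain a b where "xs = a @ x # b" using assms(2) split_list by metis
  then have "successively (\<lambda>x y. (x, y) \<in> E) (x # (b @ ys))"
    using assms(1) by (simp add: successively_append_iff)
  then show ?thesis using reach_Cons assms(3) by fastforce
qed

lemma ucycleI:
  assumes "length c \<ge> 3" "distinct c" "successively (uadj E) c" "uadj E (last c) (hd c)"
  shows "ucycle E c"
  unfolding ucycle_def
proof (intro conjI allI impI)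
  fix i assume i: "i < length c"
  show "uadj E (c ! i) (c ! ((i + 1) mod length c))"
  proof (cases "Suc i < length c")
    case True then show ?thesis using successively_nth[OF assms(3) True] by simp
  next
    case False
    then have "i = length c - 1" using i by simp
    moreover have "c \<noteq> []" using assms(1) by auto
    ultimately show ?thesis using assms(4) i
      by (simp add: last_conv_nth hd_conv_nth)
  qed
qed (use assms in auto)

lemma hd_last_single:
  assumes "distinct q" "q \<noteq> []" "hd q = last q"
  shows "q = [hd q]"
proof (cases q)
  case Nil then show ?thesis using assms by simp
next
  case (Cons x r)
  show ?thesis
  proof (cases r)
    case Nil then show ?thesis using Cons by simp
  next
    case (Cons y r')
    then have "last q \<in> set r" using \<open>q = x # r\<close> by simp
    then show ?thesis using assms \<open>q = x # r\<close> by auto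
  qed
qed

lemma edg_fst_butlast: "(x, y) \<in> edg p \<Longrightarrow> x \<in> set (butlast p)"
proof (induction p rule: induct_list012)
  case (3 a b zs) then show ?case by auto
qed auto

lemma edg_succ: "successively P p \<Longrightarrow> (x, y) \<in> edg p \<Longrightarrow> P x y"
proof (induction p rule: induct_list012)
  case (3 a b zs) then show ?case by auto
qed auto

lemma diverge:
  assumes acyc: "acyclic E" and forest: "uforest (E - F)"
    and sp: "successively (\<lambda>x y. (x, y) \<in> E) (s # a # p'')" and dp: "distinct (s # a # p'')"
    and sq: "successively (\<lambda>x y. (x, y) \<in> E) (s # b # q'')" and dq: "distinct (s # b # q'')"
    and la: "last (a # p'') = last (b # q'')"
    and eF: "edg (s # a # p'') \<inter> F = edg (s # b # q'') \<inter> F"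
    and ab: "a \<noteq> b"
  shows False
proof -
  define p' where "p' = a # p''"
  define q' where "q' = b # q''"
  define p where "p = s # p'"
  define q where "q = s # q'"
  have "last p' \<in> set q'" using la unfolding p'_def q'_def by (metis last_in_set list.distinct(1))
  then have "\<exists>x\<in>set p'. x \<in> set q'" unfolding p'_def by (metis last_in_set list.distinct(1))
  then obtain p1 w p3 where p'split: "p' = p1 @ w # p3" and wq: "w \<in> set q'"
    and p1q: "\<forall>z\<in>set p1. z \<notin> set q'"
    using split_list_first_prop[of p' "\<lambda>x. x \<in> set q'"] by blast
  obtain q2 q3 where q'split: "q' = q2 @ w # q3" using wq split_list by metis
  define A where "A = s # p1 @ [w]"
  define B where "B = s # q2 @ [w]"
  have pA: "p = A @ p3" unfolding p_def A_def p'split by simp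
  have qB: "q = B @ q3" unfolding q_def B_def q'split by simp
  have dp': "distinct p" using dp unfolding p_def p'_def by simp
  have dq': "distinct q" using dq unfolding q_def q'_def by simp
  have sp': "successively (\<lambda>x y. (x, y) \<in> E) p" using sp unfolding p_def p'_def by simp
  have sq': "successively (\<lambda>x y. (x, y) \<in> E) q" using sq unfolding q_def q'_def by simp
  have eF': "edg p \<inter> F = edg q \<inter> F" using eF unfolding p_def p'_def q_def q'_def .
  have sp1: "s \<notin> set p'" using dp unfolding p'_def by simp
  have sq1: "s \<notin> set q'" using dq unfolding q'_def by simp
  have first_p: "y = a" if "(s, y) \<in> edg p" for y
    using edg_first[of s a p'' y] that dp unfolding p_def p'_def by simp
  have first_q: "y = b" if "(s, y) \<in> edg q" for y
    using edg_first[of s b q'' y] that dq unfolding q_def q'_def by simp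
  have notFA: "(x, y) \<notin> F" if xy: "(x, y) \<in> edg A" for x y
  proof
    assume xF: "(x, y) \<in> F"
    have inp: "(x, y) \<in> edg p" using xy pA edg_prefix by blast
    then have inq: "(x, y) \<in> edg q" using xF eF' by blast
    have "x \<in> set (butlast A)" using edg_fst_butlast[OF xy] .
    then have "x = s \<or> x \<in> set p1" unfolding A_def by (simp add: butlast_append)
    then show False
    proof
      assume "x = s" then show False using first_p first_q inp inq ab by blast
    next
      assume x1: "x \<in> set p1"
      then have "x \<notin> set q'" using p1q by blast
      moreover have "x \<noteq> s" using x1 sp1 p'split by auto
      moreover have "x \<in> set q" using edg_fst[OF inq] .
      ultimately show False unfolding q_def by simp
    qed
  qed
  have notFB: "(x, y) \<notin> F" if xy: "(x, y) \<in> edg B" for x y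
  proof
    assume xF: "(x, y) \<in> F"
    have inq: "(x, y) \<in> edg q" using xy qB edg_prefix by blast
    then have inp: "(x, y) \<in> edg p" using xF eF' by blast
    have "x \<in> set (butlast B)" using edg_fst_butlast[OF xy] .
    then have "x = s \<or> x \<in> set q2" unfolding B_def by (simp add: butlast_append)
    then show False
    proof
      assume "x = s" then show False using first_p first_q inp inq ab by blast
    next
      assume x2: "x \<in> set q2"
      have xq': "x \<in> set q'" using x2 q'split by simp
      have "x \<noteq> s" using xq' sq1 by auto
      moreover have "x \<in> set p" using edg_fst[OF inp] .
      ultimately have "x \<in> set p'" unfolding p_def by simp
      moreover have "x \<notin> set p1" using p1q xq' by blast
      moreover have "x \<noteq> w" using x2 dq' unfolding q_def q'split by auto
      ultimately have x3: "x \<in> set p3" using p'split by simp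
      have "(x, w) \<in> E\<^sup>+"
        using reach_app[of E "s # q2" "w # q3" x w] sq' x2 unfolding q_def q'split by simp
      moreover have "(w, x) \<in> E\<^sup>+"
        using reach_app[of E "s # p1 @ [w]" p3 w x] sp' x3 unfolding p_def p'split by simp
      ultimately have "(x, x) \<in> E\<^sup>+" by (rule trancl_trans)
      then show False using acyc unfolding acyclic_def by blast
    qed
  qed
  define E' where "E' = E - F"
  have sA: "successively (\<lambda>x y. (x, y) \<in> E') A"
  proof (rule succ_edg)
    fix x y assume xy: "(x, y) \<in> edg A"
    then have "(x, y) \<in> edg p" using pA edg_prefix by blast
    then have "(x, y) \<in> E" using edg_succ[OF sp'] by blast
    then show "(x, y) \<in> E'" using notFA[OF xy] unfolding E'_def by blast
  qed
  have sB: "successively (\<lambda>x y. (x, y) \<in> E') B"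
  proof (rule succ_edg)
    fix x y assume xy: "(x, y) \<in> edg B"
    then have "(x, y) \<in> edg q" using qB edg_prefix by blast
    then have "(x, y) \<in> E" using edg_succ[OF sq'] by blast
    then show "(x, y) \<in> E'" using notFB[OF xy] unfolding E'_def by blast
  qed
  define c where "c = A @ rev q2"
  have sB2: "successively (\<lambda>x y. (x, y) \<in> E') (q2 @ [w])"
    using sB unfolding B_def by (simp add: successively_Cons)
  have sAu: "successively (uadj E') A"
    using sA by (rule successively_mono) (simp add: uadj_def)
  have sq2: "successively (\<lambda>x y. uadj E' y x) q2"
  proof -
    have "successively (\<lambda>x y. (x, y) \<in> E') q2" using sB2 by (simp add: successively_append_iff)
    then show ?thesis by (rule successively_mono) (simp add: uadj_def)
  qed
  have junc: "q2 = [] \<or> uadj E' w (last q2)"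
    using sB2 by (auto simp: successively_append_iff uadj_def)
  have succ_c: "successively (uadj E') c"
  proof -
    have "A \<noteq> []" "last A = w" unfolding A_def by auto
    then show ?thesis unfolding c_def using sAu sq2 junc
      by (subst successively_append_iff) (auto simp: last_rev hd_rev)
  qed
  have close: "uadj E' (last c) (hd c)"
  proof (cases "q2 = []")
    case True
    then show ?thesis using sB unfolding c_def A_def B_def by (simp add: uadj_def)
  next
    case False
    then have "(s, hd q2) \<in> E'" using sB unfolding B_def by (cases q2) auto
    then show ?thesis using False unfolding c_def A_def by (simp add: uadj_def last_rev)
  qed
  have len: "length c \<ge> 3"
  proof (rule ccontr)
    assume "\<not> 3 \<le> length c"
    then have "p1 = [] \<and> q2 = []" unfolding c_def A_def by (cases p1; cases q2) auto
    then have "a = w" "b = w" using p'split q'split unfolding p'_def q'_def by auto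
    then show False using ab by simp
  qed
  have dA: "distinct A" using dp' pA by simp
  have dq2: "distinct q2" using dq' unfolding q_def q'split by simp
  have disj: "set A \<inter> set q2 = {}"
  proof -
    have "s \<notin> set q2" using sq1 q'split by auto
    moreover have "w \<notin> set q2" using dq' unfolding q_def q'split by auto
    moreover have "set p1 \<inter> set q2 = {}" using p1q q'split by auto
    ultimately show ?thesis unfolding A_def by auto
  qed
  have "distinct c" unfolding c_def using dA dq2 disj by simp
  then have "ucycle E' c" using ucycleI len succ_c close by blast
  then show False using forest unfolding uforest_def E'_def by blast
qed

lemma inj_paths:
  assumes acyc: "acyclic E" and forest: "uforest (E - F)"
  shows "successively (\<lambda>x y. (x, y) \<in> E) p \<Longrightarrow> distinct p \<Longrightarrow> p \<noteq> [] \<Longrightarrow>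
    successively (\<lambda>x y. (x, y) \<in> E) q \<Longrightarrow> distinct q \<Longrightarrow> q \<noteq> [] \<Longrightarrow>
    hd p = hd q \<Longrightarrow> last p = last q \<Longrightarrow> edg p \<inter> F = edg q \<inter> F \<Longrightarrow> p = q"
proof (induction p arbitrary: q)
  case Nil then show ?case by simp
next
  case (Cons s p')
  note sp = Cons.prems(1) and dp = Cons.prems(2) and sq = Cons.prems(4) and dq = Cons.prems(5)
    and qne = Cons.prems(6) and hq = Cons.prems(7) and lq = Cons.prems(8) and eF = Cons.prems(9)
  obtain q' where q: "q = s # q'" using qne hq by (cases q) auto
  show ?case
  proof (cases p')
    case Nil
    then have "hd q = last q" using hq lq by simp
    then have "q = [hd q]" using hd_last_single dq qne by blast
    then show ?thesis using Nil q by simp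
  next
    case (Cons a p'')
    note p' = this
    show ?thesis
    proof (cases q')
      case Nil
      then have "hd (s # p') = last (s # p')" using lq q by simp
      then have "s # p' = [s]" using hd_last_single[of "s # p'"] dp by simp
      then show ?thesis using p' by simp
    next
      case (Cons b q'')
      note q' = this
      have l2: "last (a # p'') = last (b # q'')" using lq q q' p' by simp
      have sp2: "successively (\<lambda>x y. (x, y) \<in> E) (s # a # p'')" "distinct (s # a # p'')"
        using sp dp p' by auto
      have sq2: "successively (\<lambda>x y. (x, y) \<in> E) (s # b # q'')" "distinct (s # b # q'')"
        using sq dq q q' by auto
      have eF2: "edg (s # a # p'') \<inter> F = edg (s # b # q'') \<inter> F"
        using eF q q' p' by simp
      show ?thesis
      proof (cases "a = b")
        case False
        then show ?thesis
          using diverge[OF acyc forest sp2(1) sp2(2) sq2(1) sq2(2) l2 eF2] by blast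
      next
        case True
        have e1: "edg (s # a # p'') = insert (s, a) (edg (a # p''))" by simp
        have e2: "edg (s # b # q'') = insert (s, a) (edg (b # q''))" using True by simp
        have n1: "(s, a) \<notin> edg (a # p'')" using edg_fst sp2(2) by fastforce
        have n2: "(s, a) \<notin> edg (b # q'')" using edg_fst sq2(2) by fastforce
        have "edg (a # p'') \<inter> F = edg (b # q'') \<inter> F" using eF2 n1 n2 unfolding e1 e2 by (auto simp: set_eq_iff)
        moreover have "successively (\<lambda>x y. (x, y) \<in> E) (a # p'')" using sp2(1) by simp
        moreover have "successively (\<lambda>x y. (x, y) \<in> E) (b # q'')" using sq2(1) by simp
        moreover have "distinct (a # p'')" using sp2(2) by simp
        moreover have "distinct (b # q'')" using sq2(2) by simp
        ultimately have "p' = q'"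
          using Cons.IH[of "b # q''"] l2 True p' q' by simp
        then show ?thesis using q by simp
      qed
    qed
  qed
qed

lemma dpath_succ: "dpath E s t p \<Longrightarrow> successively (\<lambda>x y. (x, y) \<in> E) p"
  unfolding dpath_def successively_conv_nth by simp

lemma ucycle_empty: "\<not> ucycle {} c"
proof
  assume "ucycle {} c"
  then have "0 < length c" "\<forall>i<length c. uadj {} (c ! i) (c ! ((i + 1) mod length c))"
    unfolding ucycle_def by auto
  then have "uadj {} (c ! 0) (c ! ((0 + 1) mod length c))" by blast
  then show False by (simp add: uadj_def)
qed

lemma uforest_empty: "uforest {}"
  unfolding uforest_def using ucycle_empty by blast

theorem lemma3:
  fixes V :: "'a set" and E :: "('a \<times> 'a) set" and s t :: 'a
  assumes "is_dag V E" and "s \<in> V" and "t \<in> V"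
  shows "card {p. dpath E s t p} \<le> 2 ^ fes E"
proof -
  have finE: "finite E" and acyc: "acyclic E" using assms(1) unfolding is_dag_def
    by (auto intro: finite_subset)
  define S where "S = {F. F \<subseteq> E \<and> uforest (E - F)}"
  have "E \<in> S" unfolding S_def using uforest_empty by simp
  moreover have "finite S" unfolding S_def using finE by simp
  ultimately have "Min (card ` S) \<in> card ` S" by (intro Min_in) auto
  then obtain F where FS: "F \<in> S" and cF: "card F = fes E"
    unfolding fes_def S_def[symmetric] by auto
  have FE: "F \<subseteq> E" and forest: "uforest (E - F)" using FS unfolding S_def by auto
  have finF: "finite F" using FE finE finite_subset by blast
  have inj: "inj_on (\<lambda>p. edg p \<inter> F) {p. dpath E s t p}"
  proof (rule inj_onI)
    fix p q assume p: "p \<in> {p. dpath E s t p}" and q: "q \<in> {p. dpath E s t p}"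
      and eq: "edg p \<inter> F = edg q \<inter> F"
    show "p = q"
    proof (rule inj_paths[OF acyc forest])
      show "successively (\<lambda>x y. (x, y) \<in> E) p" using p dpath_succ by simp
      show "successively (\<lambda>x y. (x, y) \<in> E) q" using q dpath_succ by simp
      show "distinct p" "p \<noteq> []" "distinct q" "q \<noteq> []" "hd p = hd q" "last p = last q"
        using p q unfolding dpath_def by auto
    qed (rule eq)
  qed
  have "card {p. dpath E s t p} \<le> card (Pow F)"
    by (rule card_inj_on_le[OF inj]) (use finF in auto)
  also have "\<dots> = 2 ^ fes E" using card_Pow[OF finF] cF by simp
  finally show ?thesis .
qed

end
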